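(* Fix an integer $b>1$. For each positive integer $m$, let $k_m=r+1$, where $r\ge 0$ is the exponent with $b^r\mid m$ and $b^{r+1}\nmid m$. Then, as formal power series in $q$, $$\sum_{n=0}^\infty p(n)q^n \equiv \prod_{m=1}^\infty \left(1+q^m+q^{2m}+\cdots+q^{(b-1)m}\right)^{k_m} \pmod{b},$$ where the congruence means that the coefficients of $q^n$ agree modulo $b$ for every $n$. Equivalently, the number of partitions of $n$ is congruent modulo $b$ to the number of partitions of $n$ in which, for each $m$, parts of size $m$ come in $k_m$ distinct types and each type of part of size $m$ appears at most $b-1$ times.
   Context: $p(n)$ denotes the number of partitions of $n$, with $p(0)=1$. *)

theory Defs
  imports "HOL-Library.Multiset" "HOL-Computational_Algebra.Computational_Algebra" "HOL-Number_Theory.Cong"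
begin

definition partitions_of :: "nat \<Rightarrow> nat multiset set" where
  "partitions_of n = {M. (\<forall>x\<in>#M. 0 < x) \<and> sum_mset M = n}"

definition partition_count :: "nat \<Rightarrow> nat" where
  "partition_count n = card (partitions_of n)"

definition kexp :: "nat \<Rightarrow> nat \<Rightarrow> nat" where
  "kexp b m = Suc (GREATEST r. b ^ r dvd m)"

definition geom_factor :: "nat \<Rightarrow> nat \<Rightarrow> int fps" where
  "geom_factor b m = (\<Sum>j<b. fps_X ^ (j * m))"

end

theory Submission
  imports Defs
begin

definition eqN :: "nat \<Rightarrow> int fps \<Rightarrow> int fps \<Rightarrow> bool" where
  "eqN N f g \<longleftrightarrow> (\<forall>n\<le>N. f $ n = g $ n)"

lemma eqN_refl: "eqN N f f" by (simp add: eqN_def)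
lemma eqN_sym: "eqN N f g \<Longrightarrow> eqN N g f" by (simp add: eqN_def)
lemma eqN_trans: "eqN N f g \<Longrightarrow> eqN N g h \<Longrightarrow> eqN N f h" by (simp add: eqN_def)

lemma eqN_mult: assumes "eqN N f f'" "eqN N g g'" shows "eqN N (f*g) (f'*g')"
  unfolding eqN_def
proof (intro allI impI)
  fix n assume n: "n \<le> N"
  show "(f*g)$n = (f'*g')$n" unfolding fps_mult_nth
    by (rule sum.cong) (use assms n in \<open>auto simp: eqN_def\<close>)
qed

lemma eqN_prod: "finite A \<Longrightarrow> (\<And>x. x\<in>A \<Longrightarrow> eqN N (f x) (g x)) \<Longrightarrow> eqN N (\<Prod>x\<in>A. f x) (\<Prod>x\<in>A. g x)"
  by (induction A rule: finite_induct) (auto simp: eqN_refl intro: eqN_mult)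

definition G :: "nat \<Rightarrow> int fps" where "G m = Abs_fps (\<lambda>n. if m dvd n then 1 else 0)"

lemma G_D: assumes "m > 0" shows "G m * (1 - fps_X ^ m) = 1"
proof (rule fps_ext)
  fix n
  have "(G m * (1 - fps_X ^ m)) $ n = G m $ n - (fps_X ^ m * G m) $ n"
    by (simp add: algebra_simps)
  also have "\<dots> = (if n = 0 then 1 else 0)"
    using assms by (auto simp: fps_X_power_mult_nth G_def dvd_minus_self dest: dvd_imp_le)
  finally show "(G m * (1 - fps_X ^ m)) $ n = 1 $ n" by simp
qed

lemma geom_D: "geom_factor b m * (1 - fps_X ^ m) = 1 - fps_X ^ (b*m)"
proof -
  have "geom_factor b m * (1 - fps_X ^ m) = (\<Sum>j<b. fps_X ^ (j * m) - fps_X ^ (Suc j * m))"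
    unfolding geom_factor_def sum_distrib_right
    by (rule sum.cong) (simp_all add: algebra_simps power_add)
  also have "\<dots> = 1 - fps_X ^ (b*m)"
    by (subst sum_lessThan_telescope'[where f="\<lambda>j. fps_X ^ (j*m)"]) simp
  finally show ?thesis .
qed

lemma G_step: assumes "m > 0" "b > 0" shows "G m = geom_factor b m * G (b*m)"
proof -
  have "G m = G m * (G (b*m) * (1 - fps_X ^ (b*m)))" using G_D[of "b*m"] assms by simp
  also have "\<dots> = G m * G (b*m) * (geom_factor b m * (1 - fps_X ^ m))" by (simp add: geom_D)
  also have "\<dots> = (G m * (1 - fps_X ^ m)) * geom_factor b m * G (b*m)" by (simp add: algebra_simps)
  finally show ?thesis using G_D[OF assms(1)] by simp
qed

lemma G_big: "N < x \<Longrightarrow> eqN N (G x) 1"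
  by (auto simp: eqN_def G_def dest: dvd_imp_le)

lemma geom_big: assumes "N < x" "b > 0" shows "eqN N (geom_factor b x) 1"
  unfolding eqN_def
proof (intro allI impI)
  fix n assume n: "n \<le> N"
  have "geom_factor b x $ n = (\<Sum>j<b. if n = j*x then 1 else 0)" by (simp add: geom_factor_def fps_sum_nth)
  also have "\<dots> = (\<Sum>j\<in>{0}. if n = j*x then 1 else 0)"
  proof (rule sum.mono_neutral_right)
    show "\<forall>i\<in>{..<b} - {0}. (if n = i * x then 1 else 0) = (0::int)"
      using assms n by (auto) (metis le_trans less_le_not_le mult_0 not_gr_zero order_refl mult_le_mono1 Suc_leI One_nat_def mult_1)
  qed (use assms in auto)
  finally show "geom_factor b x $ n = 1 $ n" using assms n by auto
qed


lemma G_pow: assumes "m > 0" "b > 0" shows "G m = (\<Prod>i<t. geom_factor b (b^i*m)) * G (b^t*m)"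
proof (induction t)
  case (Suc t)
  have "G (b^t*m) = geom_factor b (b^t*m) * G (b^Suc t*m)"
    using G_step[of "b^t*m" b] assms by (simp add: mult.assoc)
  with Suc show ?case by (simp add: algebra_simps)
qed simp

lemma pow_gt: "(b::nat) > 1 \<Longrightarrow> n < b ^ n"
proof -
  assume "b > 1"
  hence "(2::nat)^n \<le> b^n" by (simp add: power_mono)
  moreover have "n < 2^n" by (rule less_exp)
  ultimately show ?thesis by linarith
qed

lemma G_approx: assumes "m > 0" "b > 1"
  shows "eqN N (G m) (\<Prod>i\<in>{i\<in>{..<Suc N}. b^i*m \<le> N}. geom_factor b (b^i*m))"
proof -
  have "eqN N (G m) ((\<Prod>i<Suc N. geom_factor b (b^i*m)) * 1)"
  proof -
    have "b ^ Suc N \<le> b ^ Suc N * m" using assms(1) by simp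
    hence "N < b ^ Suc N * m" using pow_gt[OF assms(2), of "Suc N"] by linarith
    hence "eqN N (G (b ^ Suc N * m)) 1" by (rule G_big)
    hence "eqN N ((\<Prod>i<Suc N. geom_factor b (b^i*m)) * G (b ^ Suc N * m)) ((\<Prod>i<Suc N. geom_factor b (b^i*m)) * 1)"
      by (intro eqN_mult eqN_refl)
    moreover have "G m = (\<Prod>i<Suc N. geom_factor b (b^i*m)) * G (b ^ Suc N * m)"
      using G_pow[of m b "Suc N"] assms by simp
    ultimately show ?thesis by simp
  qed
  also have "(\<Prod>i<Suc N. geom_factor b (b^i*m)) * 1 = (\<Prod>i<Suc N. geom_factor b (b^i*m))" by simp
  finally have 1: "eqN N (G m) (\<Prod>i<Suc N. geom_factor b (b^i*m))" .
  have 2: "eqN N (\<Prod>i<Suc N. geom_factor b (b^i*m)) (\<Prod>i<Suc N. if b^i*m \<le> N then geom_factor b (b^i*m) else 1)"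
    by (rule eqN_prod) (use geom_big assms in \<open>auto simp: eqN_refl\<close>)
  have 3: "(\<Prod>i\<in>{i\<in>{..<Suc N}. b^i*m \<le> N}. geom_factor b (b^i*m)) = (\<Prod>i<Suc N. if b^i*m \<le> N then geom_factor b (b^i*m) else 1)"
    by (rule prod.inter_filter) simp
  show ?thesis unfolding 3 by (rule eqN_trans[OF 1 2])
qed

lemma fiber_card: assumes "b > 1" "y \<in> {1..N}"
  shows "card {p \<in> Sigma {1..N} (\<lambda>m. {i\<in>{..<Suc N}. b^i*m \<le> N}). (\<lambda>(m,i). b^i*m) p = y} = kexp b y"
proof -
  define v where "v = (GREATEST r. b ^ r dvd y)"
  have y0: "y > 0" using assms by auto
  have bound: "b^r dvd y \<Longrightarrow> r < y" for r
    using pow_gt[OF assms(1), of r] dvd_imp_le[OF _ y0] by fastforce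
  have Dv: "b^v dvd y" unfolding v_def by (rule GreatestI_nat[of _ 0]) (use bound in \<open>auto intro: less_imp_le\<close>)
  have "{r. b^r dvd y} = {..v}"
  proof safe
    fix r assume "b^r dvd y" thus "r \<le> v" unfolding v_def
      by (rule Greatest_le_nat) (use bound in \<open>auto intro: less_imp_le\<close>)
  next
    fix r assume "r \<le> v" thus "b^r dvd y" using Dv by (meson dvd_trans le_imp_power_dvd)
  qed
  hence c: "card {r. b^r dvd y} = kexp b y" by (simp add: kexp_def v_def)
  have "bij_betw snd {p \<in> Sigma {1..N} (\<lambda>m. {i\<in>{..<Suc N}. b^i*m \<le> N}). (\<lambda>(m,i). b^i*m) p = y} {r. b^r dvd y}"
  proof (rule bij_betw_byWitness[where f'="\<lambda>i. (y div b^i, i)"])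
    show "snd ` {p \<in> Sigma {1..N} (\<lambda>m. {i\<in>{..<Suc N}. b^i*m \<le> N}). (\<lambda>(m,i). b^i*m) p = y} \<subseteq> {r. b^r dvd y}"
      by auto
    show "(\<lambda>i. (y div b ^ i, i)) ` {r. b ^ r dvd y} \<subseteq> {p \<in> Sigma {1..N} (\<lambda>m. {i\<in>{..<Suc N}. b^i*m \<le> N}). (\<lambda>(m,i). b^i*m) p = y}"
    proof (rule image_subsetI)
      fix r assume "r \<in> {r. b^r dvd y}"
      hence r: "b^r dvd y" by simp
      have "r < y" using bound r .
      moreover have "0 < y div b^r" using r y0 assms(1)
        by (metis dvd_div_eq_0_iff gr0I  not_one_less_zero power_eq_0_iff)
      moreover have "y div b^r \<le> N" using assms(2) div_le_dividend[of y "b^r"] by (simp del: div_le_dividend)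
      ultimately show "(y div b ^ r, r) \<in> {p \<in> Sigma {1..N} (\<lambda>m. {i\<in>{..<Suc N}. b^i*m \<le> N}). (\<lambda>(m,i). b^i*m) p = y}"
        using r assms(2) by auto
    qed
  qed (use assms(1) in auto)
  from bij_betw_same_card[OF this] c show ?thesis by simp
qed

lemma claim2: assumes "b > 1"
  shows "eqN N (\<Prod>m\<in>{1..N}. G m) (\<Prod>m\<in>{1..N}. geom_factor b m ^ kexp b m)"
proof -
  define S where "S = Sigma {1..N} (\<lambda>m. {i\<in>{..<Suc N}. b^i*m \<le> N})"
  define g where "g = (\<lambda>(m::nat,i::nat). b^i*m)"
  have fS: "finite S" unfolding S_def by auto
  have "eqN N (\<Prod>m\<in>{1..N}. G m) (\<Prod>m\<in>{1..N}. \<Prod>i\<in>{i\<in>{..<Suc N}. b^i*m \<le> N}. geom_factor b (b^i*m))"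
    by (rule eqN_prod) (use G_approx assms in auto)
  also have "(\<Prod>m\<in>{1..N}. \<Prod>i\<in>{i\<in>{..<Suc N}. b^i*m \<le> N}. geom_factor b (b^i*m)) = (\<Prod>p\<in>S. geom_factor b (g p))"
    unfolding S_def g_def by (subst prod.Sigma) (auto simp: case_prod_beta)
  also have "\<dots> = (\<Prod>y\<in>{1..N}. \<Prod>p\<in>{p. p \<in> S \<and> g p = y}. geom_factor b (g p))"
  proof (rule prod.group[symmetric])
    show "g ` S \<subseteq> {1..N}" unfolding S_def g_def using assms by (auto simp: Suc_le_eq)
  qed (use fS in auto)
  also have "\<dots> = (\<Prod>m\<in>{1..N}. geom_factor b m ^ kexp b m)"
  proof (rule prod.cong[OF refl])
    fix y assume y: "y \<in> {1..N}"
    have "(\<Prod>p\<in>{p. p \<in> S \<and> g p = y}. geom_factor b (g p)) = (\<Prod>p\<in>{p. p \<in> S \<and> g p = y}. geom_factor b y)"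
      by (rule prod.cong) auto
    also have "\<dots> = geom_factor b y ^ card {p. p \<in> S \<and> g p = y}" by simp
    also have "card {p. p \<in> S \<and> g p = y} = kexp b y"
      using fiber_card[OF assms y] unfolding S_def g_def by simp
    finally show "(\<Prod>p\<in>{p. p \<in> S \<and> g p = y}. geom_factor b (g p)) = geom_factor b y ^ kexp b y" .
  qed
  finally show ?thesis .
qed


definition PS :: "nat set \<Rightarrow> nat \<Rightarrow> nat multiset set" where
  "PS A n = {M. set_mset M \<subseteq> A \<and> sum_mset M = n}"

lemma split_ms: "M = filter_mset (\<lambda>x. x \<noteq> a) M + replicate_mset (count M a) a"
  by (simp add: multiset_eq_iff)

lemma PS_bij: assumes "a \<notin> A" "a > 0"
  shows "bij_betw (\<lambda>M. (count M a, filter_mset (\<lambda>x. x \<noteq> a) M)) (PS (insert a A) n)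
           (Sigma {j. j*a \<le> n} (\<lambda>j. PS A (n - j*a)))"
proof (rule bij_betw_byWitness[where f'="\<lambda>(j,M'). M' + replicate_mset j a"])
  show "\<forall>M\<in>PS (insert a A) n. (case (count M a, filter_mset (\<lambda>x. x \<noteq> a) M) of (j, M') \<Rightarrow> M' + replicate_mset j a) = M"
    by (auto simp: multiset_eq_iff)
  show "\<forall>p\<in>Sigma {j. j*a \<le> n} (\<lambda>j. PS A (n - j*a)). (\<lambda>M. (count M a, filter_mset (\<lambda>x. x \<noteq> a) M)) (case p of (j, M') \<Rightarrow> M' + replicate_mset j a) = p"
  proof (rule ballI)
    fix p assume p: "p \<in> Sigma {j. j*a \<le> n} (\<lambda>j. PS A (n - j*a))"
    obtain j M' where pj: "p = (j, M')" by (cases p)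
    have "M' \<in> PS A (n - j*a)" using p pj by simp
    hence s: "set_mset M' \<subseteq> A" by (simp add: PS_def)
    hence c: "count M' a = 0" using assms(1) by (meson count_eq_zero_iff subsetD)
    have "filter_mset (\<lambda>x. x \<noteq> a) (M' + replicate_mset j a) = M'"
      using c by (auto simp: multiset_eq_iff)
    thus "(\<lambda>M. (count M a, filter_mset (\<lambda>x. x \<noteq> a) M)) (case p of (j, M') \<Rightarrow> M' + replicate_mset j a) = p"
      using c pj by simp
  qed
  show "(\<lambda>M. (count M a, filter_mset (\<lambda>x. x \<noteq> a) M)) ` PS (insert a A) n \<subseteq> Sigma {j. j*a \<le> n} (\<lambda>j. PS A (n - j*a))"
  proof (rule image_subsetI)
    fix M assume M: "M \<in> PS (insert a A) n"
    have e: "sum_mset M = sum_mset (filter_mset (\<lambda>x. x \<noteq> a) M) + count M a * a"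
      by (subst split_ms[of M a]) simp
    show "(count M a, filter_mset (\<lambda>x. x \<noteq> a) M) \<in> Sigma {j. j*a \<le> n} (\<lambda>j. PS A (n - j*a))"
      using M e by (auto simp: PS_def)
  qed
  show "(\<lambda>(j,M'). M' + replicate_mset j a) ` Sigma {j. j*a \<le> n} (\<lambda>j. PS A (n - j*a)) \<subseteq> PS (insert a A) n"
    by (force simp: PS_def split: if_splits)
qed

lemma claim1: "finite A \<Longrightarrow> 0 \<notin> A \<Longrightarrow> finite (PS A n) \<and> int (card (PS A n)) = (\<Prod>m\<in>A. G m) $ n"
proof (induction A arbitrary: n rule: finite_induct)
  case empty
  have "PS {} n = (if n = 0 then {{#}} else {})" by (auto simp: PS_def)
  thus ?case by simp
next
  case (insert a A)
  have a0: "a > 0" using insert by auto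
  have IH: "\<And>n. finite (PS A n) \<and> int (card (PS A n)) = (\<Prod>m\<in>A. G m) $ n" using insert by auto
  have fJ: "finite {j. j*a \<le> n}"
  proof (rule finite_subset[of _ "{..n}"])
    show "{j. j*a \<le> n} \<subseteq> {..n}"
    proof
      fix x assume "x \<in> {j. j*a \<le> n}"
      hence "x*a \<le> n" by simp
      moreover have "x \<le> x*a" using mult_le_mono2[of 1 a x] a0 by simp
      ultimately have "x \<le> n" by linarith
      thus "x \<in> {..n}" by simp
    qed
  qed simp
  have fS: "finite (Sigma {j. j*a \<le> n} (\<lambda>j. PS A (n - j*a)))" using fJ IH by auto
  note bij = PS_bij[OF insert(2) a0, of n]
  have fin: "finite (PS (insert a A) n)" using bij_betw_finite[OF bij] fS by simp
  have "int (card (PS (insert a A) n)) = int (card (Sigma {j. j*a \<le> n} (\<lambda>j. PS A (n - j*a))))"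
    using bij_betw_same_card[OF bij] by simp
  also have "\<dots> = (\<Sum>j\<in>{j. j*a \<le> n}. (\<Prod>m\<in>A. G m) $ (n - j*a))"
  proof -
    have "card (Sigma {j. j*a \<le> n} (\<lambda>j. PS A (n - j*a))) = (\<Sum>j\<in>{j. j*a \<le> n}. card (PS A (n - j*a)))"
      by (rule card_SigmaI) (use fJ IH in auto)
    hence "int (card (Sigma {j. j*a \<le> n} (\<lambda>j. PS A (n - j*a)))) = (\<Sum>j\<in>{j. j*a \<le> n}. int (card (PS A (n - j*a))))"
      by simp
    also have "\<dots> = (\<Sum>j\<in>{j. j*a \<le> n}. (\<Prod>m\<in>A. G m) $ (n - j*a))"
      by (rule sum.cong) (use IH in auto)
    finally show ?thesis .
  qed
  also have "\<dots> = (\<Sum>i\<in>(\<lambda>j. j*a) ` {j. j*a \<le> n}. (\<Prod>m\<in>A. G m) $ (n - i))"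
    by (subst sum.reindex) (use a0 in \<open>auto simp: inj_on_def\<close>)
  also have "(\<lambda>j. j*a) ` {j. j*a \<le> n} = {i\<in>{0..n}. a dvd i}"
    by (auto simp: image_def dvd_def mult.commute)
  also have "(\<Sum>i\<in>{i\<in>{0..n}. a dvd i}. (\<Prod>m\<in>A. G m) $ (n - i)) = (\<Sum>i=0..n. G a $ i * (\<Prod>m\<in>A. G m) $ (n - i))"
  proof -
    have "(\<Sum>i\<in>{i\<in>{0..n}. a dvd i}. (\<Prod>m\<in>A. G m) $ (n - i)) = (\<Sum>i=0..n. if a dvd i then (\<Prod>m\<in>A. G m) $ (n - i) else 0)"
      by (rule sum.inter_filter) simp
    also have "\<dots> = (\<Sum>i=0..n. G a $ i * (\<Prod>m\<in>A. G m) $ (n - i))"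
      by (rule sum.cong) (simp_all add: G_def)
    finally show ?thesis .
  qed
  also have "\<dots> = (\<Prod>m\<in>insert a A. G m) $ n"
    using insert by (simp add: fps_mult_nth)
  finally show ?case using fin by simp
qed

lemma pc_PS: assumes "n \<le> N" shows "partition_count n = card (PS {1..N} n)"
proof -
  have "partitions_of n = PS {1..N} n"
    unfolding PS_def partitions_of_def
  proof safe
    fix M x assume M: "\<forall>x\<in>#M. 0 < x" "n = sum_mset M" and x: "x \<in># M"
    obtain M' where "M = add_mset x M'" using multi_member_split[OF x] by blast
    hence "x \<le> n" using M by auto
    thus "x \<in> {1..N}" using M x assms by (auto simp: Suc_le_eq)
  qed auto
  thus ?thesis by (simp add: partition_count_def)
qed

theorem theorem3:
  fixes b n N :: nat
  assumes "b > 1" and "n \<le> N"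
  shows "[int (partition_count n)
          = fps_nth (\<Prod>m\<in>{1..N}. geom_factor b m ^ kexp b m) n] (mod int b)"
proof -
  have "int (partition_count n) = (\<Prod>m\<in>{1..N}. G m) $ n"
    using pc_PS[OF assms(2)] claim1[of "{1..N}" n] by simp
  also have "\<dots> = (\<Prod>m\<in>{1..N}. geom_factor b m ^ kexp b m) $ n"
    using claim2[OF assms(1), of N] assms(2) by (simp add: eqN_def)
  finally show ?thesis by simp
qed

end
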